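(* If $B,C\in \mathcal{B}_{A}(\mathcal{H})$, then \begin{align*} d\omega _{A_{0}}^{2}\left( \begin{bmatrix} 0 & B \\ C & 0 \end{bmatrix} \right) &\leq \frac{1}{2}\max \left\{ \omega _{A}\left( \left( C^{\sharp _{A}}C\right) ^{2}+C^{\sharp _{A}}C\right) ,\omega _{A}\left( B^{\sharp _{A}}B+ \left( B^{\sharp _{A}}B\right) ^{2} \right) \right\} \\ &\quad+\frac{1}{2}\max \left\{ \omega _{A}\left( \left( C^{\sharp _{A}}C\right) ^{2}-C^{\sharp _{A}}C\right), \omega _{A}\left( B^{\sharp _{A}}B-\left( B^{\sharp _{A}}B\right) ^{2} \right) \right\} \\ &\quad +\omega _{A_{0}}\left( \begin{bmatrix} 0 & C^{\sharp _{A}}CB \\ B^{\sharp _{A}}BC & 0 \end{bmatrix} \right). \end{align*}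
   Context: $\mathcal{H}$ is a complex Hilbert space and $A\in\mathcal{B}(\mathcal{H})$ is a positive operator; $\langle x,z\rangle_A=\langle Ax,z\rangle$ and $\|z\|_A=\|A^{1/2}z\|$. $\mathcal{B}_A(\mathcal{H})$ denotes the set of bounded operators $S$ on $\mathcal{H}$ admitting an $A$-adjoint; $S^{\sharp_A}=A^{\dagger}S^*A$ is the distinguished $A$-adjoint ($A^\dagger$ the Moore-Penrose inverse). $\omega_A(S)=\sup\{|\langle Sz,z\rangle_A|:\|z\|_A=1\}$ is the $A$-numerical radius. $A_0=\begin{bmatrix} A&0\\0&A\end{bmatrix}$ on $\mathcal{H}\oplus\mathcal{H}$ induces $\langle x,z\rangle_{A_0}=\langle x_1,z_1\rangle_A+\langle x_2,z_2\rangle_A$; $\omega_{A_0}$ is the $A_0$-numerical radius and $d\omega_{A_0}(X)=\sup\{(|\langle Xz,z\rangle_{A_0}|^2+\|Xz\|_{A_0}^4)^{1/2}:\|z\|_{A_0}=1\}$ is the $A_0$-Davis-Wielandt radius. *)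

theory Defs
  imports "HOL-Analysis.Analysis"
begin

text \<open>Complex Hilbert spaces (the library has none): an abelian group with a complex
  scalar multiplication and a complex inner product, linear in the first argument,
  complete w.r.t. the induced norm.\<close>

class chilbert = ab_group_add +
  fixes cscale :: "complex \<Rightarrow> 'a \<Rightarrow> 'a"
    and cinner :: "'a \<Rightarrow> 'a \<Rightarrow> complex"
  assumes cscale_add_right: "cscale a (x + y) = cscale a x + cscale a y"
    and cscale_add_left: "cscale (a + b) x = cscale a x + cscale b x"
    and cscale_cscale: "cscale a (cscale b x) = cscale (a * b) x"
    and cscale_one: "cscale 1 x = x"
    and cinner_add_left: "cinner (x + y) z = cinner x z + cinner y z"
    and cinner_cscale_left: "cinner (cscale a x) z = a * cinner x z"
    and cinner_commute: "cinner y x = cnj (cinner x y)"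
    and cinner_nonneg: "0 \<le> Re (cinner x x)"
    and cinner_eq_zero: "cinner x x = 0 \<Longrightarrow> x = 0"
    and complete:
      "(\<forall>e>0. \<exists>N. \<forall>m\<ge>N. \<forall>n\<ge>N. sqrt (Re (cinner (X m - X n) (X m - X n))) < e)
        \<Longrightarrow> \<exists>L. (\<lambda>n. sqrt (Re (cinner (X n - L) (X n - L)))) \<longlonglongrightarrow> 0"

definition cnorm :: "'a::chilbert \<Rightarrow> real" where
  "cnorm x = sqrt (Re (cinner x x))"

definition cbounded_linear :: "('a::chilbert \<Rightarrow> 'a) \<Rightarrow> bool" where
  "cbounded_linear T \<longleftrightarrow>
     (\<forall>x y. T (x + y) = T x + T y) \<and> (\<forall>a x. T (cscale a x) = cscale a (T x)) \<and>
     (\<exists>K. \<forall>x. cnorm (T x) \<le> K * cnorm x)"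

definition positive_op :: "('a::chilbert \<Rightarrow> 'a) \<Rightarrow> bool" where
  "positive_op A \<longleftrightarrow> cbounded_linear A \<and>
     (\<forall>x. Im (cinner (A x) x) = 0 \<and> 0 \<le> Re (cinner (A x) x))"

definition ainner :: "('a::chilbert \<Rightarrow> 'a) \<Rightarrow> 'a \<Rightarrow> 'a \<Rightarrow> complex" where
  "ainner A x z = cinner (A x) z"

definition anorm :: "('a::chilbert \<Rightarrow> 'a) \<Rightarrow> 'a \<Rightarrow> real" where
  "anorm A z = sqrt (Re (ainner A z z))"

definition hadjoint :: "('a::chilbert \<Rightarrow> 'a) \<Rightarrow> 'a \<Rightarrow> 'a" where
  "hadjoint S y = (THE w. \<forall>x. cinner (S x) y = cinner x w)"

text \<open>Moore-Penrose inverse of A, defined on R(A) + R(A)^perp: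
  for y = Ax + w with w \<perp> R(A), A-dagger y is the unique u \<perp> N(A) with Au = Ax.\<close>
definition mp_inv :: "('a::chilbert \<Rightarrow> 'a) \<Rightarrow> 'a \<Rightarrow> 'a" where
  "mp_inv A y = (THE u. \<exists>x w. y = A x + w \<and> (\<forall>v. cinner w (A v) = 0) \<and>
                        A u = A x \<and> (\<forall>k. A k = 0 \<longrightarrow> cinner u k = 0))"

definition has_A_adjoint :: "('a::chilbert \<Rightarrow> 'a) \<Rightarrow> ('a \<Rightarrow> 'a) \<Rightarrow> bool" where
  "has_A_adjoint A S \<longleftrightarrow> cbounded_linear S \<and>
     (\<exists>W. cbounded_linear W \<and> (\<forall>x y. ainner A (S x) y = ainner A x (W y)))"

definition sharpA :: "('a::chilbert \<Rightarrow> 'a) \<Rightarrow> ('a \<Rightarrow> 'a) \<Rightarrow> 'a \<Rightarrow> 'a" where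
  "sharpA A S = (\<lambda>z. mp_inv A (hadjoint S (A z)))"

text \<open>A-numerical radius (supremum of nonnegative reals; convention sup of empty set = 0).\<close>
definition omegaA :: "('a::chilbert \<Rightarrow> 'a) \<Rightarrow> ('a \<Rightarrow> 'a) \<Rightarrow> real" where
  "omegaA A T = Sup (insert 0 {cmod (ainner A (T z) z) | z. anorm A z = 1})"

text \<open>H \<oplus> H is modelled as 'a \<times> 'a, with A_0 = diag(A, A).\<close>
definition a0inner :: "('a::chilbert \<Rightarrow> 'a) \<Rightarrow> 'a \<times> 'a \<Rightarrow> 'a \<times> 'a \<Rightarrow> complex" where
  "a0inner A x z = ainner A (fst x) (fst z) + ainner A (snd x) (snd z)"

definition a0norm :: "('a::chilbert \<Rightarrow> 'a) \<Rightarrow> 'a \<times> 'a \<Rightarrow> real" where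
  "a0norm A z = sqrt (Re (a0inner A z z))"

definition omegaA0 :: "('a::chilbert \<Rightarrow> 'a) \<Rightarrow> ('a \<times> 'a \<Rightarrow> 'a \<times> 'a) \<Rightarrow> real" where
  "omegaA0 A X = Sup (insert 0 {cmod (a0inner A (X z) z) | z. a0norm A z = 1})"

definition dwA0 :: "('a::chilbert \<Rightarrow> 'a) \<Rightarrow> ('a \<times> 'a \<Rightarrow> 'a \<times> 'a) \<Rightarrow> real" where
  "dwA0 A X = Sup (insert 0 {sqrt ((cmod (a0inner A (X z) z))\<^sup>2 + (a0norm A (X z))^4)
                              | z. a0norm A z = 1})"

definition offdiag :: "('a \<Rightarrow> 'a) \<Rightarrow> ('a \<Rightarrow> 'a) \<Rightarrow> 'a \<times> 'a \<Rightarrow> 'a \<times> 'a" where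
  "offdiag B C = (\<lambda>(x1, x2). (B x2, C x1))"

end

theory Submission
  imports Defs
begin


lemma cinner_zero_left[simp]: "cinner 0 (z::'a::chilbert) = 0"
  using cinner_add_left[of "0::'a" 0 z] by simp

lemma cinner_minus_left: "cinner (- x) (z::'a::chilbert) = - cinner x z"
  using cinner_add_left[of x "-x" z] by (simp add: eq_neg_iff_add_eq_0 add.commute)

lemma cinner_diff_left: "cinner (x - y) (z::'a::chilbert) = cinner x z - cinner y z"
  using cinner_add_left[of x "-y" z] by (simp add: cinner_minus_left)

lemma cinner_add_right: "cinner z (x + y) = cinner z x + cinner (z::'a::chilbert) y"
  by (metis cinner_add_left cinner_commute complex_cnj_add)

lemma cinner_zero_right[simp]: "cinner (z::'a::chilbert) 0 = 0"
  by (metis cinner_commute cinner_zero_left complex_cnj_zero)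

lemma cinner_diff_right: "cinner z (x - y) = cinner z x - cinner (z::'a::chilbert) y"
  by (metis cinner_diff_left cinner_commute complex_cnj_diff)

lemma cinner_cscale_right: "cinner z (cscale a x) = cnj a * cinner (z::'a::chilbert) x"
  by (metis cinner_cscale_left cinner_commute complex_cnj_mult)

lemma cscale_zero[simp]: "cscale a (0::'a::chilbert) = 0"
  using cscale_add_right[of a "0::'a" 0] by simp

lemma cscale_zero_left[simp]: "cscale 0 (x::'a::chilbert) = 0"
  using cscale_add_left[of 0 0 x] by simp

lemma cscale_minus: "cscale a (- x) = - cscale a (x::'a::chilbert)"
  using cscale_add_right[of a x "-x"] by (simp add: eq_neg_iff_add_eq_0 add.commute)

lemma cscale_diff: "cscale a (x - y) = cscale a x - cscale a (y::'a::chilbert)"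
  using cscale_add_right[of a x "-y"] by (simp add: cscale_minus)

lemma cscale_minus_left: "cscale (-a) x = - cscale a (x::'a::chilbert)"
  using cscale_add_left[of a "-a" x] by (simp add: eq_neg_iff_add_eq_0 add.commute)

lemma cinner_self_Im: "Im (cinner x (x::'a::chilbert)) = 0"
  using cinner_commute[of x x] by (metis cnj.sel(2) complex_eq_iff equation_minus_iff zero_complex.simps(2) add.inverse_neutral neg_equal_zero)

lemma cinner_self_real: "cinner x (x::'a::chilbert) = complex_of_real (Re (cinner x x))"
  using cinner_self_Im by (simp add: complex_eq_iff)



lemma quad_aux:
  fixes a b c :: real
  assumes b: "b \<ge> 0" and c: "c \<ge> 0" and h: "\<And>t. 0 \<le> a - 2*t*b + t^2*b*c"
  shows "b \<le> a * c"
proof (cases "c = 0")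
  case True
  show ?thesis
  proof (rule ccontr)
    assume "\<not> b \<le> a * c"
    then have bp: "b > 0" using True by simp
    have "0 \<le> a - 2*((a+1)/(2*b))*b + ((a+1)/(2*b))^2*b*c" by (rule h)
    also have "\<dots> = -1" using bp True by (simp add: field_simps)
    finally show False by simp
  qed
next
  case False
  then have cp: "c > 0" using c by simp
  have "0 \<le> a - 2*(1/c)*b + (1/c)^2*b*c" by (rule h)
  also have "\<dots> = a - b/c" using cp by (simp add: field_simps power2_eq_square)
  finally show ?thesis using cp by (simp add: field_simps)
qed

locale sesq =
  fixes f :: "'v::ab_group_add \<Rightarrow> 'v \<Rightarrow> complex" and sc :: "complex \<Rightarrow> 'v \<Rightarrow> 'v"
  assumes add_left: "f (x + y) z = f x z + f y z"
    and sc_left: "f (sc a x) z = a * f x z"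
    and herm: "f y x = cnj (f x y)"
    and pos: "0 \<le> Re (f x x)"
begin

lemma add_right: "f z (x + y) = f z x + f z y"
  by (metis add_left herm complex_cnj_add)

lemma sc_right: "f z (sc a x) = cnj a * f z x"
  by (metis sc_left herm complex_cnj_mult)

lemma self_Im: "Im (f x x) = 0"
  using herm[of x x] by (metis cnj.sel(2) equation_minus_iff neg_equal_zero)

lemma self_real: "f x x = complex_of_real (Re (f x x))"
  using self_Im by (simp add: complex_eq_iff)

lemma expand2: "f (sc p x + sc q y) (sc p x + sc q y)
   = p * cnj p * f x x + p * cnj q * f x y + q * cnj p * cnj (f x y) + q * cnj q * f y y"
  by (simp add: add_left add_right sc_left sc_right herm[of x y] algebra_simps)

lemma expand1: "f (x + sc q y) (x + sc q y)
   = f x x + cnj q * f x y + q * cnj (f x y) + q * cnj q * f y y"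
  by (simp add: add_left add_right sc_left sc_right herm[of x y] algebra_simps)

lemma expand_t: "Re (f (x + sc (- (complex_of_real t * f x y)) y) (x + sc (- (complex_of_real t * f x y)) y))
   = Re (f x x) - 2*t*(cmod (f x y))^2 + t^2 * (cmod (f x y))^2 * Re (f y y)"
proof -
  have e: "cnj (f x y) * f x y = complex_of_real ((cmod (f x y))^2)"
    using complex_norm_square[of "f x y"] by (simp add: mult.commute)
  have yy: "f y y = complex_of_real (Re (f y y))" by (rule self_real)
  show ?thesis
    unfolding expand1
    apply (subst yy)
    apply (simp add: algebra_simps)
    apply (simp add: e mult.assoc[symmetric] )
    apply (simp add: mult.commute[of _ "cnj (f x y)"] mult.assoc e)
    using cmod_power2[of "f x y"] by (simp add: power2_eq_square algebra_simps)
qed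

lemma cs_sq: "(cmod (f x y))^2 \<le> Re (f x x) * Re (f y y)"
  by (rule quad_aux) (use pos expand_t[symmetric] in auto)

lemma cs: "cmod (f x y) \<le> sqrt (Re (f x x)) * sqrt (Re (f y y))"
  by (metis cs_sq real_le_rsqrt real_sqrt_mult norm_ge_zero)

lemma orth:
  assumes "\<And>a. Re (f x x) \<le> Re (f (x + sc a y) (x + sc a y))"
  shows "f x y = 0"
proof -
  have "(cmod (f x y))^2 \<le> 0 * Re (f y y)"
    by (rule quad_aux) (use pos assms[of "- (complex_of_real _ * f x y)"] expand_t in auto)
  then show ?thesis by simp
qed

lemma zero_left: "Re (f x x) = 0 \<Longrightarrow> f x y = 0"
  using cs[of x y] by simp

lemma bombieri:
  assumes e: "Re (f e e) = 1"
  shows "(cmod (f a e))^2 + (cmod (f b e))^2 \<le> max (Re (f a a)) (Re (f b b)) + cmod (f a b)"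
proof -
  define p where "p = cnj (f a e)"
  define q where "q = cnj (f b e)"
  define s where "s = (cmod (f a e))^2 + (cmod (f b e))^2"
  define v where "v = sc p a + sc q b"
  define M where "M = max (Re (f a a)) (Re (f b b))"
  define K where "K = cmod (f a b)"
  have s0: "s \<ge> 0" unfolding s_def by simp
  have "f v e = p * f a e + q * f b e" unfolding v_def by (simp add: add_left sc_left)
  also have "\<dots> = complex_of_real s" unfolding p_def q_def s_def
    using complex_norm_square[of "f a e"] complex_norm_square[of "f b e"] by (simp add: mult.commute)
  finally have fve: "f v e = complex_of_real s" .
  have "s = cmod (f v e)" using fve s0 by simp
  also have "\<dots> \<le> sqrt (Re (f v v)) * sqrt (Re (f e e))" by (rule cs)
  finally have s1: "s \<le> sqrt (Re (f v v))" using e by simp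
  have aa: "f a a = complex_of_real (Re (f a a))" and bb: "f b b = complex_of_real (Re (f b b))"
    by (rule self_real)+
  have pp: "p * cnj p = complex_of_real ((cmod p)^2)" using complex_norm_square[of p] by simp
  have qq: "q * cnj q = complex_of_real ((cmod q)^2)" using complex_norm_square[of q] by simp
  have "Re (f v v) = (cmod p)^2 * Re (f a a) + (cmod q)^2 * Re (f b b)
      + Re (p * cnj q * f a b + q * cnj p * cnj (f a b))"
    unfolding v_def expand2 by (subst aa, subst bb, simp add: pp qq)
  also have "Re (p * cnj q * f a b + q * cnj p * cnj (f a b)) = 2 * Re (p * cnj q * f a b)"
  proof -
    have "q * cnj p * cnj (f a b) = cnj (p * cnj q * f a b)" by simp
    then show ?thesis by (simp only: plus_complex.sel(1) cnj.sel(1))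
  qed
  also have "2 * Re (p * cnj q * f a b) \<le> 2 * (cmod p * cmod q * K)"
    using complex_Re_le_cmod[of "p * cnj q * f a b"] by (simp add: K_def norm_mult)
  also have "\<dots> \<le> ((cmod p)^2 + (cmod q)^2) * K"
  proof -
    have "2 * (cmod p * cmod q) \<le> (cmod p)^2 + (cmod q)^2"
      using sum_squares_bound[of "cmod p" "cmod q"] by simp
    from mult_right_mono[OF this, of K] show ?thesis unfolding K_def by (simp add: mult.assoc)
  qed
  finally have "Re (f v v) \<le> (cmod p)^2 * Re (f a a) + (cmod q)^2 * Re (f b b) + ((cmod p)^2 + (cmod q)^2) * K"
    by simp
  also have "(cmod p)^2 * Re (f a a) + (cmod q)^2 * Re (f b b) \<le> (cmod p)^2 * M + (cmod q)^2 * M"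
    unfolding M_def by (intro add_mono mult_left_mono) auto
  finally have fvv: "Re (f v v) \<le> s * (M + K)"
    unfolding s_def p_def q_def by (simp add: algebra_simps)
  have MK: "M + K \<ge> 0" unfolding M_def K_def using pos[of a] by simp
  have "s^2 \<le> s * (M + K)"
  proof -
    have "s^2 \<le> (sqrt (Re (f v v)))^2" by (rule power_mono[OF s1 s0])
    also have "\<dots> = Re (f v v)" using pos[of v] by simp
    finally show ?thesis using fvv by simp
  qed
  then have "s \<le> M + K" using s0 MK
    by (cases "s = 0") (auto simp: power2_eq_square)
  then show ?thesis unfolding s_def M_def K_def .
qed

end



lemma bl_add: "cbounded_linear T \<Longrightarrow> T (x + y) = T x + T y"
  unfolding cbounded_linear_def by blast
lemma bl_scale: "cbounded_linear T \<Longrightarrow> T (cscale a x) = cscale a (T x)"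
  unfolding cbounded_linear_def by blast
lemma bl_zero: "cbounded_linear (T::'a::chilbert\<Rightarrow>'a) \<Longrightarrow> T 0 = 0"
  using bl_add[of T 0 0] by simp
lemma bl_minus: "cbounded_linear (T::'a::chilbert\<Rightarrow>'a) \<Longrightarrow> T (- x) = - T x"
  using bl_add[of T x "-x"] bl_zero[of T] by (simp add: eq_neg_iff_add_eq_0 add.commute)
lemma bl_diff: "cbounded_linear (T::'a::chilbert\<Rightarrow>'a) \<Longrightarrow> T (x - y) = T x - T y"
  using bl_add[of T x "-y"] bl_minus[of T y] by simp
lemma bl_bound: fixes T :: "'a::chilbert \<Rightarrow> 'a" assumes "cbounded_linear T"
  shows "\<exists>K>0. \<forall>x. cnorm (T x) \<le> K * cnorm x"
proof -
  obtain K where K: "\<forall>x. cnorm (T x) \<le> K * cnorm x" using assms unfolding cbounded_linear_def by blast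
  have "\<forall>x. cnorm (T x) \<le> (max K 0 + 1) * cnorm x"
  proof
    fix x :: 'a
    have "cnorm x \<ge> 0" unfolding cnorm_def by (simp add: cinner_nonneg)
    then have "K * cnorm x \<le> (max K 0 + 1) * cnorm x" by (intro mult_right_mono) auto
    then show "cnorm (T x) \<le> (max K 0 + 1) * cnorm x" using K by (meson order_trans)
  qed
  then show ?thesis by (intro exI[of _ "max K 0 + 1"]) auto
qed

lemma bl_comp: "cbounded_linear S \<Longrightarrow> cbounded_linear T \<Longrightarrow> cbounded_linear (S \<circ> T)"
proof -
  assume s: "cbounded_linear S" and t: "cbounded_linear T"
  obtain K1 where K1: "K1 > 0" "\<forall>x. cnorm (S x) \<le> K1 * cnorm x" using bl_bound[OF s] by blast
  obtain K2 where K2: "K2 > 0" "\<forall>x. cnorm (T x) \<le> K2 * cnorm x" using bl_bound[OF t] by blast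
  have "\<forall>x. cnorm (S (T x)) \<le> (K1 * K2) * cnorm x"
  proof
    fix x
    have "cnorm (S (T x)) \<le> K1 * cnorm (T x)" using K1 by blast
    also have "\<dots> \<le> K1 * (K2 * cnorm x)" using K1(1) K2(2) by (intro mult_left_mono) auto
    finally show "cnorm (S (T x)) \<le> (K1 * K2) * cnorm x" by (simp add: mult.assoc)
  qed
  then show ?thesis using s t unfolding cbounded_linear_def by auto
qed

lemma sesq_cinner: "sesq (cinner :: 'a::chilbert \<Rightarrow> 'a \<Rightarrow> complex) cscale"
  by unfold_locales (auto simp: cinner_add_left cinner_cscale_left cinner_nonneg intro: cinner_commute)

lemma pos_bl: "positive_op A \<Longrightarrow> cbounded_linear A"
  unfolding positive_op_def by blast

lemma pos_herm:
  fixes A :: "'a::chilbert \<Rightarrow> 'a"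
  assumes A: "positive_op A"
  shows "cinner (A x) y = cinner x (A y)"
proof -
  have bl: "cbounded_linear A" using A by (rule pos_bl)
  have r: "\<And>x. Im (cinner (A x) x) = 0" using A unfolding positive_op_def by blast
  have g: "Im (cinner (A x) y + cinner (A y) x) = 0" for x y
  proof -
    have "cinner (A (x + y)) (x + y) = cinner (A x) x + cinner (A y) y + (cinner (A x) y + cinner (A y) x)"
      by (simp add: bl_add[OF bl] cinner_add_left cinner_add_right algebra_simps)
    then show ?thesis using r[of "x+y"] r[of x] r[of y] by simp
  qed
  have h1: "Im (cinner (A x) y) = - Im (cinner (A y) x)" using g[of x y] by simp
  have "Im (cinner (A (cscale \<i> x)) y + cinner (A y) (cscale \<i> x)) = 0" by (rule g)
  then have h2: "Re (cinner (A x) y) = Re (cinner (A y) x)"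
    by (simp add: bl_scale[OF bl] cinner_cscale_left cinner_cscale_right)
  have "cinner (A x) y = cnj (cinner (A y) x)" using h1 h2 by (simp add: complex_eq_iff)
  also have "\<dots> = cinner x (A y)" by (metis cinner_commute)
  finally show ?thesis .
qed

lemma sesq_ainner:
  fixes A :: "'a::chilbert \<Rightarrow> 'a"
  assumes A: "positive_op A"
  shows "sesq (ainner A) cscale"
proof -
  have bl: "cbounded_linear A" using A by (rule pos_bl)
  show ?thesis
  proof
    fix x y z :: 'a and a
    show "ainner A (x + y) z = ainner A x z + ainner A y z"
      by (simp add: ainner_def bl_add[OF bl] cinner_add_left)
    show "ainner A (cscale a x) z = a * ainner A x z"
      by (simp add: ainner_def bl_scale[OF bl] cinner_cscale_left)
    show "ainner A y x = cnj (ainner A x y)"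
      unfolding ainner_def by (metis pos_herm[OF A] cinner_commute)
    show "0 \<le> Re (ainner A x x)" using A unfolding positive_op_def ainner_def by blast
  qed
qed

definition sc0 :: "complex \<Rightarrow> 'a::chilbert \<times> 'a \<Rightarrow> 'a \<times> 'a" where
  "sc0 a z = (cscale a (fst z), cscale a (snd z))"

lemma sesq_a0inner:
  fixes A :: "'a::chilbert \<Rightarrow> 'a"
  assumes A: "positive_op A"
  shows "sesq (a0inner A) sc0"
proof -
  interpret s: sesq "ainner A" cscale by (rule sesq_ainner[OF A])
  show ?thesis
  proof
    fix x y z :: "'a \<times> 'a" and a
    show "a0inner A (x + y) z = a0inner A x z + a0inner A y z"
      by (simp add: a0inner_def s.add_left)
    show "a0inner A (sc0 a x) z = a * a0inner A x z"
      by (simp add: a0inner_def sc0_def s.sc_left algebra_simps)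
    show "a0inner A y x = cnj (a0inner A x y)"
      unfolding a0inner_def by (metis s.herm complex_cnj_add)
    show "0 \<le> Re (a0inner A x x)" using s.pos unfolding a0inner_def by (simp add: add_nonneg_nonneg)
  qed
qed



lemma cnorm_nonneg[simp]: "0 \<le> cnorm (x::'a::chilbert)"
  unfolding cnorm_def by (simp add: cinner_nonneg)

lemma cnorm_sq: "(cnorm (x::'a::chilbert))^2 = Re (cinner x x)"
  unfolding cnorm_def by (simp add: cinner_nonneg)

lemma cnorm_zero: "cnorm (x::'a::chilbert) = 0 \<Longrightarrow> x = 0"
proof -
  assume "cnorm x = 0"
  then have "Re (cinner x x) = 0" using cnorm_sq[of x] by simp
  then have "cinner x x = 0" by (subst cinner_self_real) simp
  then show "x = 0" by (rule cinner_eq_zero)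
qed

lemma cnorm_minus: "cnorm (- (x::'a::chilbert)) = cnorm x"
proof -
  have m: "- x = cscale (-1) x" by (simp add: cscale_minus_left cscale_one)
  show ?thesis unfolding cnorm_def m by (simp add: cinner_cscale_left cinner_cscale_right)
qed

lemma cnorm_diff_commute: "cnorm ((x::'a::chilbert) - y) = cnorm (y - x)"
  using cnorm_minus[of "y - x"] by simp

lemma cnorm_triangle: "cnorm ((x::'a::chilbert) + y) \<le> cnorm x + cnorm y"
proof -
  interpret c: sesq "cinner :: 'a \<Rightarrow> 'a \<Rightarrow> complex" cscale by (rule sesq_cinner)
  have "(cnorm (x + y))^2 = Re (cinner x x) + Re (cinner y y) + 2 * Re (cinner x y)"
    unfolding cnorm_sq by (simp add: c.add_left c.add_right c.herm[of x y])
  also have "Re (cinner x y) \<le> cnorm x * cnorm y"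
    using c.cs[of x y] complex_Re_le_cmod[of "cinner x y"] unfolding cnorm_def by linarith
  then have "Re (cinner x x) + Re (cinner y y) + 2 * Re (cinner x y) \<le> (cnorm x + cnorm y)^2"
    unfolding power2_sum cnorm_sq by linarith
  finally show ?thesis
    by (meson add_nonneg_nonneg cnorm_nonneg power2_le_imp_le)
qed

lemma parallelogram: "(cnorm ((x::'a::chilbert) + y))^2 + (cnorm (x - y))^2 = 2 * (cnorm x)^2 + 2 * (cnorm y)^2"
  unfolding cnorm_sq
  by (simp add: cinner_add_left cinner_add_right cinner_diff_left cinner_diff_right)

lemma cnorm_cscale_sq: "(cnorm (cscale a (x::'a::chilbert)))^2 = (cmod a)^2 * (cnorm x)^2"
proof -
  have "cinner (cscale a x) (cscale a x) = (a * cnj a) * cinner x x"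
    by (simp add: cinner_cscale_left cinner_cscale_right)
  also have "a * cnj a = complex_of_real ((cmod a)^2)" using complex_norm_square[of a] by simp
  finally show ?thesis unfolding cnorm_sq by simp
qed

lemma proj_exists:
  fixes A :: "'a::chilbert \<Rightarrow> 'a"
  assumes bl: "cbounded_linear A"
  shows "\<exists>u'. A u' = A u \<and> (\<forall>k. A k = 0 \<longrightarrow> cinner u' k = 0)"
proof -
  interpret c: sesq "cinner :: 'a \<Rightarrow> 'a \<Rightarrow> complex" cscale by (rule sesq_cinner)
  define D where "D = {cnorm (u - k) | k. A k = 0}"
  define d where "d = Inf D"
  have Dne: "D \<noteq> {}" unfolding D_def using bl_zero[OF bl] by auto
  have Dbdd: "bdd_below D" unfolding D_def by (rule bdd_belowI[of _ 0]) auto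
  have dle: "d \<le> cnorm (u - k)" if "A k = 0" for k
    unfolding d_def by (rule cInf_lower) (use that Dbdd in \<open>auto simp: D_def\<close>)
  have d0: "d \<ge> 0" unfolding d_def by (rule cInf_greatest[OF Dne]) (auto simp: D_def)
  have "\<exists>k. A k = 0 \<and> (cnorm (u - k))^2 < d^2 + inverse (real (Suc n))" for n
  proof -
    have "d < sqrt (d^2 + inverse (real (Suc n)))"
    proof -
      have "sqrt (d^2) < sqrt (d^2 + inverse (real (Suc n)))" by (rule real_sqrt_less_mono) simp
      then show ?thesis using d0 by simp
    qed
    then obtain x where "x \<in> D" "x < sqrt (d^2 + inverse (real (Suc n)))"
      using cInf_lessD[OF Dne] unfolding d_def by blast
    then obtain k where k: "A k = 0" "cnorm (u - k) < sqrt (d^2 + inverse (real (Suc n)))"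
      unfolding D_def by blast
    then have "(cnorm (u - k))^2 < (sqrt (d^2 + inverse (real (Suc n))))^2"
      by (intro power_strict_mono) auto
    then have "(cnorm (u - k))^2 < d^2 + inverse (real (Suc n))"
      by (simp add: add_nonneg_nonneg)
    then show ?thesis using k by blast
  qed
  then obtain kk where kk0: "\<And>n. A (kk n) = 0"
    and kk: "\<And>n. (cnorm (u - kk n))^2 < d^2 + inverse (real (Suc n))"
    by metis
  have Nadd: "A (x + y) = 0" if "A x = 0" "A y = 0" for x y using that bl_add[OF bl] by simp
  have Ndiff: "A (x - y) = 0" if "A x = 0" "A y = 0" for x y using that bl_diff[OF bl] by simp
  have Nsc: "A (cscale a x) = 0" if "A x = 0" for x a using that bl_scale[OF bl] by simp
  have cauchy_sq: "(cnorm (kk m - kk n))^2 \<le> 2 * inverse (real (Suc n)) + 2 * inverse (real (Suc m))" for m n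
  proof -
    define mid where "mid = cscale (1/2) (kk n + kk m)"
    have midN: "A mid = 0" unfolding mid_def by (intro Nsc Nadd kk0)
    have e1: "(u - kk n) + (u - kk m) = cscale 2 (u - mid)"
    proof -
      have "cscale (1+1) (u - mid) = u + u - cscale ((1+1) * (1/2)) (kk n + kk m)"
        unfolding mid_def by (simp only: cscale_diff cscale_cscale cscale_add_left cscale_one)
      also have "\<dots> = (u - kk n) + (u - kk m)" by (simp add: cscale_one)
      finally show ?thesis by simp
    qed
    have e2: "(u - kk n) - (u - kk m) = kk m - kk n" by simp
    have "(cnorm (cscale 2 (u - mid)))^2 = 4 * (cnorm (u - mid))^2"
      by (simp add: cnorm_cscale_sq)
    moreover have "d^2 \<le> (cnorm (u - mid))^2" using dle[OF midN] d0 by (simp add: power_mono)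
    moreover note parallelogram[of "u - kk n" "u - kk m"] kk[of n] kk[of m]
    ultimately show ?thesis unfolding e1 e2 by linarith
  qed
  have cauchy: "\<forall>e>0. \<exists>N. \<forall>m\<ge>N. \<forall>n\<ge>N. sqrt (Re (cinner (kk m - kk n) (kk m - kk n))) < e"
  proof (intro allI impI)
    fix e :: real assume e: "e > 0"
    obtain N :: nat where N: "4 / e^2 < real N" using reals_Archimedean2 by blast
    have "\<forall>m\<ge>N. \<forall>n\<ge>N. cnorm (kk m - kk n) < e"
    proof (intro allI impI)
      fix m n assume mn: "m \<ge> N" "n \<ge> N"
      have inv: "inverse (real (Suc k)) \<le> inverse (real (Suc N))" if "k \<ge> N" for k
        using that by (simp add: le_imp_inverse_le)
      have "(cnorm (kk m - kk n))^2 \<le> 4 * inverse (real (Suc N))"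
        using cauchy_sq[of m n] inv[OF mn(1)] inv[OF mn(2)] by linarith
      also have "\<dots> < e^2"
      proof -
        have "4 / e^2 < real (Suc N)" using N by simp
        then have "4 < e^2 * real (Suc N)" using e by (simp add: pos_divide_less_eq mult.commute)
        then have "4 / real (Suc N) < e^2" by (simp add: pos_divide_less_eq del: of_nat_Suc)
        then show ?thesis by (simp add: inverse_eq_divide del: of_nat_Suc)
      qed
      finally have "(cnorm (kk m - kk n))^2 < e^2" .
      then show "cnorm (kk m - kk n) < e"
        by (rule power_less_imp_less_base) (use e in simp)
    qed
    then show "\<exists>N. \<forall>m\<ge>N. \<forall>n\<ge>N. sqrt (Re (cinner (kk m - kk n) (kk m - kk n))) < e"
      unfolding cnorm_def by blast
  qed
  obtain L where L: "(\<lambda>n. cnorm (kk n - L)) \<longlonglongrightarrow> 0"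
    using complete[OF cauchy] unfolding cnorm_def by blast
  obtain K where K: "K > 0" "\<forall>x. cnorm (A x) \<le> K * cnorm x" using bl_bound[OF bl] by blast
  have AL: "A L = 0"
  proof -
    have "\<forall>n. cnorm (A L) \<le> K * cnorm (kk n - L)"
    proof
      fix n
      have "A L = A (L - kk n)" using bl_diff[OF bl] kk0[of n] by simp
      then have "cnorm (A L) \<le> K * cnorm (L - kk n)" using K by simp
      then show "cnorm (A L) \<le> K * cnorm (kk n - L)" by (simp add: cnorm_diff_commute)
    qed
    moreover have "(\<lambda>n. K * cnorm (kk n - L)) \<longlonglongrightarrow> K * 0" by (intro tendsto_intros L)
    ultimately have "cnorm (A L) \<le> K * 0" by (intro LIMSEQ_le_const) auto
    then have "cnorm (A L) = 0" by (simp add: antisym)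
    then show ?thesis by (rule cnorm_zero)
  qed
  have uL: "cnorm (u - L) \<le> d"
  proof -
    have "\<forall>n. cnorm (u - L) \<le> sqrt (d^2 + inverse (real (Suc n))) + cnorm (kk n - L)"
    proof
      fix n
      have "cnorm (u - L) \<le> cnorm (u - kk n) + cnorm (kk n - L)"
        using cnorm_triangle[of "u - kk n" "kk n - L"] by simp
      moreover have "cnorm (u - kk n) \<le> sqrt (d^2 + inverse (real (Suc n)))"
        using kk[of n] by (intro real_le_rsqrt) simp
      ultimately show "cnorm (u - L) \<le> sqrt (d^2 + inverse (real (Suc n))) + cnorm (kk n - L)"
        by linarith
    qed
    moreover have "(\<lambda>n. sqrt (d^2 + inverse (real (Suc n))) + cnorm (kk n - L)) \<longlonglongrightarrow> sqrt (d^2 + 0) + 0"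
      by (intro tendsto_intros L LIMSEQ_inverse_real_of_nat)
    ultimately have "cnorm (u - L) \<le> sqrt (d^2 + 0) + 0" by (intro LIMSEQ_le_const) auto
    then show ?thesis using d0 by simp
  qed
  show ?thesis
  proof (intro exI conjI allI impI)
    show "A (u - L) = A u" using bl_diff[OF bl] AL by simp
  next
    fix k assume k: "A k = 0"
    show "cinner (u - L) k = 0"
    proof (rule c.orth)
      fix a
      have eq: "u - L + cscale a k = u - (L - cscale a k)" by simp
      have "cnorm (u - L) \<le> cnorm (u - L + cscale a k)"
        unfolding eq using uL dle[OF Ndiff[OF AL Nsc[of k a, OF k]]] by linarith
      then have "(cnorm (u - L))^2 \<le> (cnorm (u - L + cscale a k))^2"
        by (simp add: power_mono)
      then show "Re (cinner (u - L) (u - L)) \<le> Re (cinner (u - L + cscale a k) (u - L + cscale a k))"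
        unfolding cnorm_sq .
    qed
  qed
qed



lemma pos_herm': "positive_op A \<Longrightarrow> cinner x (A y) = cinner (A x) (y::'a::chilbert)"
  by (simp add: pos_herm)

lemma hadj_eq:
  fixes A S W :: "'a::chilbert \<Rightarrow> 'a"
  assumes A: "positive_op A" and W: "\<And>x y. ainner A (S x) y = ainner A x (W y)"
  shows "hadjoint S (A v) = A (W v)"
  unfolding hadjoint_def
proof (rule the_equality)
  show "\<forall>x. cinner (S x) (A v) = cinner x (A (W v))"
  proof
    fix x
    have "cinner (S x) (A v) = ainner A (S x) v" unfolding ainner_def by (simp add: pos_herm[OF A])
    also have "\<dots> = ainner A x (W v)" by (rule W)
    also have "\<dots> = cinner x (A (W v))" unfolding ainner_def by (simp add: pos_herm[OF A])
    finally show "cinner (S x) (A v) = cinner x (A (W v))" .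
  qed
  fix w assume h: "\<forall>x. cinner (S x) (A v) = cinner x w"
  have "\<forall>x. cinner x (w - A (W v)) = 0"
  proof
    fix x
    have "cinner (S x) (A v) = cinner x (A (W v))" unfolding ainner_def
      using W[of x v] by (simp add: ainner_def pos_herm[OF A])
    then show "cinner x (w - A (W v)) = 0" using h by (simp add: cinner_diff_right)
  qed
  then show "w = A (W v)" using cinner_eq_zero[of "w - A (W v)"] by simp
qed

lemma mp_inv_range:
  fixes A :: "'a::chilbert \<Rightarrow> 'a"
  assumes A: "positive_op A"
  shows "A (mp_inv A (A v)) = A v"
proof -
  have bl: "cbounded_linear A" using A by (rule pos_bl)
  define P where "P = (\<lambda>u. \<exists>x w. A v = A x + w \<and> (\<forall>v. cinner w (A v) = 0) \<and>
                        A u = A x \<and> (\<forall>k. A k = 0 \<longrightarrow> cinner u k = 0))"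
  have PA: "A u = A v" if "P u" for u
  proof -
    obtain x w where h: "A v = A x + w" "\<forall>v. cinner w (A v) = 0" "A u = A x"
      using \<open>P u\<close> unfolding P_def by blast
    have "w = A (v - x)" using h(1) bl_diff[OF bl, of v x] by (simp add: algebra_simps)
    then have "cinner w w = 0" using h(2) by metis
    then have "w = 0" by (rule cinner_eq_zero)
    then show ?thesis using h by simp
  qed
  have uniq: "u1 = u2" if p1: "P u1" and p2: "P u2" for u1 u2
  proof -
    have o1: "\<forall>k. A k = 0 \<longrightarrow> cinner u1 k = 0" using p1 unfolding P_def by blast
    have o2: "\<forall>k. A k = 0 \<longrightarrow> cinner u2 k = 0" using p2 unfolding P_def by blast
    have "A (u1 - u2) = 0" using PA[OF p1] PA[OF p2] bl_diff[OF bl] by simp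
    then have "cinner (u1 - u2) (u1 - u2) = 0"
      using o1 o2 by (simp add: cinner_diff_left)
    then have "u1 - u2 = 0" by (rule cinner_eq_zero)
    then show "u1 = u2" by simp
  qed
  obtain u' where u': "A u' = A v" "\<forall>k. A k = 0 \<longrightarrow> cinner u' k = 0"
    using proj_exists[OF bl] by blast
  have pu: "P u'" unfolding P_def using u' by (intro exI[of _ v] exI[of _ 0]) auto
  have ex1: "\<exists>!u. P u" using pu uniq by blast
  have "P (mp_inv A (A v))"
    unfolding mp_inv_def using theI'[OF ex1] unfolding P_def .
  then show ?thesis by (rule PA)
qed

lemma sharp_A:
  fixes A S W :: "'a::chilbert \<Rightarrow> 'a"
  assumes A: "positive_op A" and W: "\<And>x y. ainner A (S x) y = ainner A x (W y)"
  shows "A (sharpA A S v) = A (W v)"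
  unfolding sharpA_def hadj_eq[OF A W] by (rule mp_inv_range[OF A])

lemma sharp_id:
  fixes A S :: "'a::chilbert \<Rightarrow> 'a"
  assumes A: "positive_op A" and S: "has_A_adjoint A S"
  shows "ainner A (sharpA A S v) w = ainner A v (S w)"
proof -
  obtain W where W: "\<And>x y. ainner A (S x) y = ainner A x (W y)"
    using S unfolding has_A_adjoint_def by blast
  have "ainner A (sharpA A S v) w = cinner (A (W v)) w"
    unfolding ainner_def sharp_A[OF A W] ..
  also have "\<dots> = cinner (W v) (A w)" by (simp add: pos_herm[OF A])
  also have "\<dots> = cnj (ainner A w (W v))" unfolding ainner_def by (metis cinner_commute)
  also have "\<dots> = cnj (ainner A (S w) v)" by (simp add: W)
  also have "\<dots> = cinner v (A (S w))" unfolding ainner_def by (metis cinner_commute pos_herm[OF A])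
  also have "\<dots> = ainner A v (S w)" unfolding ainner_def by (simp add: pos_herm[OF A])
  finally show ?thesis .
qed

lemma I1:
  fixes A S :: "'a::chilbert \<Rightarrow> 'a"
  assumes A: "positive_op A" and S: "has_A_adjoint A S"
  shows "ainner A (sharpA A S (S v)) w = ainner A (S v) (S w)"
  by (rule sharp_id[OF A S])

lemma I2:
  fixes A S :: "'a::chilbert \<Rightarrow> 'a"
  assumes A: "positive_op A" and S: "has_A_adjoint A S"
  shows "ainner A v (sharpA A S (S w)) = ainner A (S v) (S w)"
proof -
  interpret a: sesq "ainner A" cscale by (rule sesq_ainner[OF A])
  have "ainner A v (sharpA A S (S w)) = cnj (ainner A (sharpA A S (S w)) v)" by (rule a.herm)
  also have "\<dots> = cnj (ainner A (S w) (S v))" by (simp add: I1[OF A S])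
  also have "\<dots> = ainner A (S v) (S w)" by (metis a.herm complex_cnj_cnj)
  finally show ?thesis .
qed



lemma anorm_nonneg[simp]: "positive_op A \<Longrightarrow> 0 \<le> anorm A z"
  unfolding anorm_def using sesq.pos[OF sesq_ainner] by simp

lemma anorm_sq: "positive_op A \<Longrightarrow> (anorm A z)^2 = Re (ainner A z z)"
  unfolding anorm_def using sesq.pos[OF sesq_ainner] by simp

lemma acs: "positive_op A \<Longrightarrow> cmod (ainner A x y) \<le> anorm A x * anorm A y"
  unfolding anorm_def by (rule sesq.cs[OF sesq_ainner])

lemma growth_contra:
  fixes rho K c :: real
  assumes K: "K > 0" and h: "\<And>n. rho ^ (2^n) \<le> c * K ^ (2^n)"
  shows "rho \<le> K"
proof (rule ccontr)
  assume "\<not> rho \<le> K"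
  then have rK: "rho > K" by simp
  define q where "q = rho / K"
  have q1: "q > 1" unfolding q_def using rK K by simp
  have hq: "q ^ (2^n) \<le> c" for n
  proof -
    have "rho ^ (2^n) = q ^ (2^n) * K ^ (2^n)" unfolding q_def using K by (simp add: power_divide)
    then show ?thesis using h[of n] K by (simp add: mult_le_cancel_right)
  qed
  obtain n :: nat where n: "c / (q - 1) < real n" using reals_Archimedean2 by blast
  have "1 + real (2^n) * (q - 1) \<le> (1 + (q - 1)) ^ (2^n)"
    by (rule Bernoulli_inequality) (use q1 in simp)
  then have "1 + real (2^n) * (q - 1) \<le> c" using hq[of n] by simp
  moreover have "real n \<le> real (2^n)" by (simp add: less_imp_le)
  then have "real n * (q - 1) \<le> real (2^n) * (q - 1)" using q1 by (intro mult_right_mono) auto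
  moreover have "c < real n * (q - 1)" using n q1 by (simp add: pos_divide_less_eq)
  ultimately show False by linarith
qed

lemma A_bounded:
  fixes A S :: "'a::chilbert \<Rightarrow> 'a"
  assumes A: "positive_op A" and S: "has_A_adjoint A S"
  shows "\<exists>c\<ge>0. \<forall>z. anorm A (S z) \<le> c * anorm A z"
proof -
  interpret a: sesq "ainner A" cscale by (rule sesq_ainner[OF A])
  interpret c: sesq "cinner :: 'a \<Rightarrow> 'a \<Rightarrow> complex" cscale by (rule sesq_cinner)
  obtain W where Wb: "cbounded_linear W" and W: "\<And>x y. ainner A (S x) y = ainner A x (W y)"
    using S unfolding has_A_adjoint_def by blast
  have Sb: "cbounded_linear S" using S unfolding has_A_adjoint_def by blast
  define T where "T = W \<circ> S"
  have Tb: "cbounded_linear T" unfolding T_def by (rule bl_comp[OF Wb Sb])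
  have T1: "ainner A (T x) y = ainner A (S x) (S y)" for x y
  proof -
    have "ainner A (T x) y = cinner (W (S x)) (A y)" unfolding T_def ainner_def by (simp add: pos_herm[OF A])
    also have "\<dots> = cnj (ainner A y (W (S x)))" unfolding ainner_def by (metis cinner_commute)
    also have "\<dots> = cnj (ainner A (S y) (S x))" by (simp add: W)
    also have "\<dots> = ainner A (S x) (S y)" by (metis a.herm complex_cnj_cnj)
    finally show ?thesis .
  qed
  have T2: "ainner A x (T y) = ainner A (S x) (S y)" for x y
    unfolding T_def by (simp add: W)
  have Tsym: "ainner A (T x) y = ainner A x (T y)" for x y using T1 T2 by simp
  have pw: "ainner A ((T^^a) y) ((T^^b) y') = ainner A ((T^^(a+b)) y) y'" for a b y y'
  proof (induction b arbitrary: a)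
    case 0 then show ?case by simp
  next
    case (Suc b)
    have "ainner A ((T^^a) y) ((T^^Suc b) y') = ainner A ((T^^a) y) (T ((T^^b) y'))" by simp
    also have "\<dots> = ainner A (T ((T^^a) y)) ((T^^b) y')" by (simp add: Tsym)
    also have "\<dots> = ainner A ((T^^Suc a) y) ((T^^b) y')" by simp
    also have "\<dots> = ainner A ((T^^(Suc a + b)) y) y'" by (rule Suc.IH)
    finally show ?case by simp
  qed
  obtain K where K: "K > 0" "\<forall>x. cnorm (T x) \<le> K * cnorm x" using bl_bound[OF Tb] by blast
  obtain KA where KA: "KA > 0" "\<forall>x. cnorm (A x) \<le> KA * cnorm x" using bl_bound[OF pos_bl[OF A]] by blast
  have Tpow: "cnorm ((T^^m) x) \<le> K^m * cnorm x" for m x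
  proof (induction m)
    case 0 then show ?case by simp
  next
    case (Suc m)
    have "cnorm ((T^^Suc m) x) \<le> K * cnorm ((T^^m) x)" using K by simp
    also have "\<dots> \<le> K * (K^m * cnorm x)" using Suc.IH K by (intro mult_left_mono) auto
    finally show ?case by (simp add: mult.assoc)
  qed
  have anA: "anorm A v \<le> sqrt KA * cnorm v" for v
  proof -
    have "(anorm A v)^2 = Re (cinner (A v) v)" using anorm_sq[OF A] unfolding ainner_def by simp
    also have "\<dots> \<le> cmod (cinner (A v) v)" by (rule complex_Re_le_cmod)
    also have "\<dots> \<le> cnorm (A v) * cnorm v" unfolding cnorm_def by (rule c.cs)
    also have "\<dots> \<le> KA * cnorm v * cnorm v" using KA by (intro mult_right_mono) auto
    also have "\<dots> = (sqrt KA * cnorm v)^2" using KA by (simp add: power2_eq_square)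
    finally have "(anorm A v)^2 \<le> (sqrt KA * cnorm v)^2" .
    then show ?thesis by (rule power2_le_imp_le) (use KA in simp)
  qed
  have Tbound: "anorm A (T z) \<le> K * anorm A z" for z
  proof -
    define g where "g n = anorm A ((T^^(2^n)) z)" for n
    define r where "r = anorm A z"
    have r0: "r \<ge> 0" unfolding r_def using A by simp
    have g0: "g n \<ge> 0" for n unfolding g_def using A by simp
    have gstep: "(g n)^2 \<le> g (Suc n) * r" for n
    proof -
      have "(g n)^2 = Re (ainner A ((T^^(2^n)) z) ((T^^(2^n)) z))" unfolding g_def by (rule anorm_sq[OF A])
      also have "\<dots> = Re (ainner A ((T^^(2^Suc n)) z) z)" by (simp add: pw mult_2)
      also have "\<dots> \<le> cmod (ainner A ((T^^(2^Suc n)) z) z)" by (rule complex_Re_le_cmod)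
      also have "\<dots> \<le> g (Suc n) * r" unfolding g_def r_def by (rule acs[OF A])
      finally show ?thesis .
    qed
    have gT: "g 0 = anorm A (T z)" unfolding g_def by simp
    show ?thesis
    proof (cases "r = 0")
      case True
      then have "(g 0)^2 \<le> 0" using gstep[of 0] by simp
      then have "g 0 = 0" by simp
      then show ?thesis using gT r_def True by simp
    next
      case False
      then have rp: "r > 0" using r0 by simp
      define rho where "rho = g 0 / r"
      have rho0: "rho \<ge> 0" unfolding rho_def using g0 r0 by simp
      have ind: "rho ^ (2^n) \<le> g n / r" for n
      proof (induction n)
        case 0 then show ?case unfolding rho_def by simp
      next
        case (Suc n)
        have "rho ^ (2^Suc n) = (rho ^ (2^n))^2" by (simp add: power_mult[symmetric] mult.commute)
        also have "\<dots> \<le> (g n / r)^2" using Suc.IH rho0 by (intro power_mono) auto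
        also have "\<dots> = (g n)^2 / r^2" by (simp add: power_divide)
        also have "\<dots> \<le> g (Suc n) * r / r^2" using gstep[of n] rp by (intro divide_right_mono) auto
        also have "\<dots> = g (Suc n) / r" using rp by (simp add: power2_eq_square)
        finally show ?case .
      qed
      have "rho ^ (2^n) \<le> (sqrt KA * cnorm z / r) * K ^ (2^n)" for n
      proof -
        have "g n \<le> sqrt KA * (K^(2^n) * cnorm z)"
          unfolding g_def using anA[of "(T^^(2^n)) z"] Tpow[of "2^n" z] KA
          by (meson mult_left_mono order_trans real_sqrt_ge_zero less_imp_le)
        then have "g n / r \<le> sqrt KA * (K^(2^n) * cnorm z) / r" using rp by (intro divide_right_mono) auto
        then show ?thesis using ind[of n] by (simp add: field_simps)
      qed
      then have "rho \<le> K" by (intro growth_contra[OF K(1)])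
      then show ?thesis using rp gT unfolding rho_def r_def by (simp add: divide_le_eq)
    qed
  qed
  have "anorm A (S z) \<le> sqrt K * anorm A z" for z
  proof -
    have "(anorm A (S z))^2 = Re (ainner A (T z) z)" unfolding anorm_sq[OF A] T1 ..
    also have "\<dots> \<le> cmod (ainner A (T z) z)" by (rule complex_Re_le_cmod)
    also have "\<dots> \<le> anorm A (T z) * anorm A z" by (rule acs[OF A])
    also have "\<dots> \<le> K * anorm A z * anorm A z" using Tbound[of z] A by (intro mult_right_mono) auto
    also have "\<dots> = (sqrt K * anorm A z)^2" using K by (simp add: power2_eq_square)
    finally have "(anorm A (S z))^2 \<le> (sqrt K * anorm A z)^2" .
    then show ?thesis by (rule power2_le_imp_le) (use K A in simp)
  qed
  then show ?thesis by (intro exI[of _ "sqrt K"]) (use K in auto)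
qed



lemma (in sesq) diff_left: "f (x - y) z = f x z - f y z"
  using add_left[of "x - y" y z] by simp

definition nS :: "('a::chilbert \<Rightarrow> 'a) \<Rightarrow> ('a \<Rightarrow> 'a) \<Rightarrow> 'a \<Rightarrow> real" where
  "nS A S y = Re (ainner A (S y) (S y))"
definition mS :: "('a::chilbert \<Rightarrow> 'a) \<Rightarrow> ('a \<Rightarrow> 'a) \<Rightarrow> 'a \<Rightarrow> real" where
  "mS A S y = Re (ainner A (sharpA A S (S y)) (sharpA A S (S y)))"

lemma L_p:
  fixes A S :: "'a::chilbert \<Rightarrow> 'a"
  assumes A: "positive_op A" and S: "has_A_adjoint A S"
  shows "ainner A (sharpA A S (S y)) y = complex_of_real (nS A S y)"
  unfolding nS_def I1[OF A S] by (rule sesq.self_real[OF sesq_ainner[OF A]])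

lemma L_pp:
  fixes A S :: "'a::chilbert \<Rightarrow> 'a"
  assumes A: "positive_op A" and S: "has_A_adjoint A S"
  shows "ainner A (sharpA A S (S (sharpA A S (S y)))) y = complex_of_real (mS A S y)"
proof -
  have "ainner A (sharpA A S (S (sharpA A S (S y)))) y = ainner A (S (sharpA A S (S y))) (S y)"
    by (rule I1[OF A S])
  also have "\<dots> = ainner A (sharpA A S (S y)) (sharpA A S (S y))" by (rule I2[OF A S, symmetric])
  finally show ?thesis unfolding mS_def using sesq.self_real[OF sesq_ainner[OF A]] by metis
qed

lemma hom_n:
  fixes A S :: "'a::chilbert \<Rightarrow> 'a"
  assumes A: "positive_op A" and S: "has_A_adjoint A S"
  shows "nS A S (cscale (complex_of_real t) y) = t^2 * nS A S y"
proof -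
  interpret a: sesq "ainner A" cscale by (rule sesq_ainner[OF A])
  have Sb: "cbounded_linear S" using S unfolding has_A_adjoint_def by blast
  show ?thesis unfolding nS_def bl_scale[OF Sb] a.sc_left a.sc_right
    by (simp add: power2_eq_square)
qed

lemma hom_m:
  fixes A S :: "'a::chilbert \<Rightarrow> 'a"
  assumes A: "positive_op A" and S: "has_A_adjoint A S"
  shows "mS A S (cscale a y) = (cmod a)^2 * mS A S y"
proof -
  interpret a: sesq "ainner A" cscale by (rule sesq_ainner[OF A])
  have Sb: "cbounded_linear S" using S unfolding has_A_adjoint_def by blast
  let ?P = "\<lambda>y. sharpA A S (S y)"
  have "ainner A (?P (cscale a y)) (?P (cscale a y)) = ainner A (S (?P (cscale a y))) (S (cscale a y))"
    by (rule I2[OF A S])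
  also have "\<dots> = cnj a * ainner A (S (?P (cscale a y))) (S y)"
    by (simp add: bl_scale[OF Sb] a.sc_right)
  also have "ainner A (S (?P (cscale a y))) (S y) = ainner A (?P (cscale a y)) (?P y)"
    by (rule I2[OF A S, symmetric])
  also have "\<dots> = ainner A (S (cscale a y)) (S (?P y))" by (rule I1[OF A S])
  also have "\<dots> = a * ainner A (S y) (S (?P y))" by (simp add: bl_scale[OF Sb] a.sc_left)
  also have "ainner A (S y) (S (?P y)) = ainner A (?P y) (?P y)" by (rule I1[OF A S, symmetric])
  finally have "ainner A (?P (cscale a y)) (?P (cscale a y)) = (a * cnj a) * ainner A (?P y) (?P y)"
    by (simp add: mult.assoc mult.left_commute)
  also have "a * cnj a = complex_of_real ((cmod a)^2)" using complex_norm_square[of a] by simp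
  finally show ?thesis unfolding mS_def by simp
qed

lemma nS_nonneg: "positive_op A \<Longrightarrow> 0 \<le> nS A S y"
  unfolding nS_def by (rule sesq.pos[OF sesq_ainner])
lemma mS_nonneg: "positive_op A \<Longrightarrow> 0 \<le> mS A S y"
  unfolding mS_def by (rule sesq.pos[OF sesq_ainner])

lemma bnd_n:
  fixes A S :: "'a::chilbert \<Rightarrow> 'a"
  assumes A: "positive_op A" and c: "c \<ge> 0" "\<And>z. anorm A (S z) \<le> c * anorm A z"
  shows "nS A S y \<le> c^2 * (anorm A y)^2"
proof -
  have "nS A S y = (anorm A (S y))^2" unfolding nS_def anorm_sq[OF A] ..
  also have "\<dots> \<le> (c * anorm A y)^2" using c A by (intro power_mono) auto
  finally show ?thesis by (simp add: power_mult_distrib)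
qed

lemma bnd_m:
  fixes A S :: "'a::chilbert \<Rightarrow> 'a"
  assumes A: "positive_op A" and S: "has_A_adjoint A S"
    and c: "c \<ge> 0" "\<And>z. anorm A (S z) \<le> c * anorm A z"
  shows "mS A S y \<le> (c^2)^2 * (anorm A y)^2"
proof -
  let ?P = "sharpA A S (S y)"
  have "(anorm A ?P)^2 = Re (ainner A ?P ?P)" by (rule anorm_sq[OF A])
  also have "\<dots> = Re (ainner A (S y) (S ?P))" by (simp add: I1[OF A S])
  also have "\<dots> \<le> cmod (ainner A (S y) (S ?P))" by (rule complex_Re_le_cmod)
  also have "\<dots> \<le> anorm A (S y) * anorm A (S ?P)" by (rule acs[OF A])
  also have "\<dots> \<le> (c * anorm A y) * (c * anorm A ?P)"
    using c A by (intro mult_mono) auto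
  finally have h: "(anorm A ?P)^2 \<le> c^2 * anorm A y * anorm A ?P"
    by (simp add: power2_eq_square mult_ac)
  have "anorm A ?P \<le> c^2 * anorm A y"
  proof (cases "anorm A ?P = 0")
    case True then show ?thesis using c A by simp
  next
    case False
    then have p: "anorm A ?P > 0" using A anorm_nonneg[OF A] by (simp add: less_le)
    then show ?thesis using h by (simp add: power2_eq_square mult_le_cancel_right)
  qed
  then have "(anorm A ?P)^2 \<le> (c^2 * anorm A y)^2" using A by (intro power_mono) auto
  then show ?thesis unfolding mS_def using anorm_sq[OF A, of ?P] by (simp add: power_mult_distrib)
qed

lemma anorm_cscale_sq: "positive_op A \<Longrightarrow> (anorm A (cscale a z))^2 = (cmod a)^2 * (anorm A z)^2"
proof -
  assume A: "positive_op A"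
  interpret a: sesq "ainner A" cscale by (rule sesq_ainner[OF A])
  have "ainner A (cscale a z) (cscale a z) = (a * cnj a) * ainner A z z"
    by (simp add: a.sc_left a.sc_right)
  also have "a * cnj a = complex_of_real ((cmod a)^2)" using complex_norm_square[of a] by simp
  finally show ?thesis unfolding anorm_sq[OF A] by simp
qed

lemma omega_le:
  fixes A T :: "'a::chilbert \<Rightarrow> 'a"
  assumes A: "positive_op A"
    and val: "\<And>z. cmod (ainner A (T z) z) = \<bar>q z\<bar>"
    and hom: "\<And>z t. q (cscale (complex_of_real t) z) = t^2 * q z"
    and bnd: "\<And>z. \<bar>q z\<bar> \<le> M * (anorm A z)^2"
  shows "\<bar>q z\<bar> \<le> omegaA A T * (anorm A z)^2 \<and> 0 \<le> omegaA A T"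
proof -
  define X where "X = insert 0 {cmod (ainner A (T z) z) | z. anorm A z = 1}"
  have bdd: "bdd_above X" unfolding X_def
    by (rule bdd_aboveI[of _ "max M 0"]) (auto simp: val intro: order_trans[OF bnd])
  have om: "omegaA A T = Sup X" unfolding omegaA_def X_def ..
  have upper: "x \<in> X \<Longrightarrow> x \<le> omegaA A T" for x unfolding om by (rule cSup_upper[OF _ bdd])
  have o0: "0 \<le> omegaA A T" by (rule upper) (simp add: X_def)
  have "\<bar>q z\<bar> \<le> omegaA A T * (anorm A z)^2"
  proof (cases "anorm A z = 0")
    case True
    then show ?thesis using bnd[of z] by simp
  next
    case False
    then have r: "anorm A z > 0" using anorm_nonneg[OF A] by (simp add: less_le)
    define t where "t = 1 / anorm A z"
    define y where "y = cscale (complex_of_real t) z"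
    have "(anorm A y)^2 = 1" unfolding y_def anorm_cscale_sq[OF A] t_def using r
      by (simp add: power_divide norm_divide)
    then have "anorm A y = 1 \<or> anorm A y = -1" using power2_eq_1_iff by blast
    then have y1: "anorm A y = 1" using anorm_nonneg[OF A, of y] by linarith
    have "\<bar>q y\<bar> \<le> omegaA A T" by (rule upper) (auto simp: X_def val[symmetric] y1 intro!: exI[of _ y])
    moreover have "\<bar>q y\<bar> = t^2 * \<bar>q z\<bar>" unfolding y_def hom by (simp add: abs_mult)
    ultimately have "t^2 * \<bar>q z\<bar> \<le> omegaA A T" by simp
    then show ?thesis using r unfolding t_def by (simp add: power_divide pos_divide_le_eq)
  qed
  then show ?thesis using o0 by blast
qed



lemma max_half: "max (u::real) v = (u + v) / 2 + \<bar>u - v\<bar> / 2"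
  by (simp add: max_def abs_if field_simps)

lemma comb_le:
  fixes p q a b :: real
  assumes "a \<ge> 0" "b \<ge> 0" "a + b = 1"
  shows "p * a + q * b \<le> max p q"
proof -
  have "p * a \<le> max p q * a" using assms by (intro mult_right_mono) auto
  moreover have "q * b \<le> max p q * b" using assms by (intro mult_right_mono) auto
  ultimately have "p * a + q * b \<le> max p q * (a + b)" by (simp add: algebra_simps)
  then show ?thesis using assms by simp
qed

theorem theorem3p8:
  fixes A B C :: "'a::chilbert \<Rightarrow> 'a"
  assumes "positive_op A"
    and "has_A_adjoint A B" and "has_A_adjoint A C"
  shows "(dwA0 A (offdiag B C))\<^sup>2 \<le>
      1/2 * max (omegaA A (\<lambda>z. sharpA A C (C (sharpA A C (C z))) + sharpA A C (C z)))
                (omegaA A (\<lambda>z. sharpA A B (B z) + sharpA A B (B (sharpA A B (B z)))))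
    + 1/2 * max (omegaA A (\<lambda>z. sharpA A C (C (sharpA A C (C z))) - sharpA A C (C z)))
                (omegaA A (\<lambda>z. sharpA A B (B z) - sharpA A B (B (sharpA A B (B z)))))
    + omegaA0 A (offdiag (\<lambda>z. sharpA A C (C (B z))) (\<lambda>z. sharpA A B (B (C z))))"
proof -
  note A = assms(1) and SB = assms(2) and SC = assms(3)
  interpret a: sesq "ainner A" cscale by (rule sesq_ainner[OF A])
  interpret f0: sesq "a0inner A" sc0 by (rule sesq_a0inner[OF A])
  obtain cB where cB: "cB \<ge> 0" "\<And>z. anorm A (B z) \<le> cB * anorm A z"
    using A_bounded[OF A SB] by blast
  obtain cC where cC: "cC \<ge> 0" "\<And>z. anorm A (C z) \<le> cC * anorm A z"
    using A_bounded[OF A SC] by blast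
  have Bb: "cbounded_linear B" using SB unfolding has_A_adjoint_def by blast
  have Cb: "cbounded_linear C" using SC unfolding has_A_adjoint_def by blast
  define wCp where "wCp = omegaA A (\<lambda>z. sharpA A C (C (sharpA A C (C z))) + sharpA A C (C z))"
  define wBp where "wBp = omegaA A (\<lambda>z. sharpA A B (B z) + sharpA A B (B (sharpA A B (B z))))"
  define wCm where "wCm = omegaA A (\<lambda>z. sharpA A C (C (sharpA A C (C z))) - sharpA A C (C z))"
  define wBm where "wBm = omegaA A (\<lambda>z. sharpA A B (B z) - sharpA A B (B (sharpA A B (B z))))"
  define Y where "Y = offdiag (\<lambda>z. sharpA A C (C (B z))) (\<lambda>z. sharpA A B (B (C z)))"
  define w0 where "w0 = omegaA0 A Y"
  have homq: "(cmod (complex_of_real t))^2 = t^2" for t by simp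
  have OCp: "\<bar>mS A C y + nS A C y\<bar> \<le> wCp * (anorm A y)^2 \<and> 0 \<le> wCp" for y
    unfolding wCp_def
  proof (rule omega_le[OF A, where M = "(cC^2)^2 + cC^2"])
    fix z
    show "cmod (ainner A (sharpA A C (C (sharpA A C (C z))) + sharpA A C (C z)) z) = \<bar>mS A C z + nS A C z\<bar>"
      by (simp add: a.add_left L_pp[OF A SC] L_p[OF A SC] del: of_real_add flip: of_real_add)
  next
    fix z t show "mS A C (cscale (complex_of_real t) z) + nS A C (cscale (complex_of_real t) z) = t^2 * (mS A C z + nS A C z)"
      by (simp add: hom_m[OF A SC] hom_n[OF A SC] algebra_simps)
  next
    fix z show "\<bar>mS A C z + nS A C z\<bar> \<le> ((cC^2)^2 + cC^2) * (anorm A z)^2"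
      using bnd_m[OF A SC cC, of z] bnd_n[OF A cC, of z] mS_nonneg[OF A, of C z] nS_nonneg[OF A, of C z]
      by (simp add: algebra_simps)
  qed
  have OBp: "\<bar>nS A B y + mS A B y\<bar> \<le> wBp * (anorm A y)^2 \<and> 0 \<le> wBp" for y
    unfolding wBp_def
  proof (rule omega_le[OF A, where M = "(cB^2)^2 + cB^2"])
    fix z
    show "cmod (ainner A (sharpA A B (B z) + sharpA A B (B (sharpA A B (B z)))) z) = \<bar>nS A B z + mS A B z\<bar>"
      by (simp add: a.add_left L_pp[OF A SB] L_p[OF A SB] del: of_real_add flip: of_real_add)
  next
    fix z t show "nS A B (cscale (complex_of_real t) z) + mS A B (cscale (complex_of_real t) z) = t^2 * (nS A B z + mS A B z)"
      by (simp add: hom_m[OF A SB] hom_n[OF A SB] algebra_simps)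
  next
    fix z show "\<bar>nS A B z + mS A B z\<bar> \<le> ((cB^2)^2 + cB^2) * (anorm A z)^2"
      using bnd_m[OF A SB cB, of z] bnd_n[OF A cB, of z] mS_nonneg[OF A, of B z] nS_nonneg[OF A, of B z]
      by (simp add: algebra_simps)
  qed
  have OCm: "\<bar>mS A C y - nS A C y\<bar> \<le> wCm * (anorm A y)^2 \<and> 0 \<le> wCm" for y
    unfolding wCm_def
  proof (rule omega_le[OF A, where M = "(cC^2)^2 + cC^2"])
    fix z
    show "cmod (ainner A (sharpA A C (C (sharpA A C (C z))) - sharpA A C (C z)) z) = \<bar>mS A C z - nS A C z\<bar>"
      by (simp add: a.diff_left L_pp[OF A SC] L_p[OF A SC] del: of_real_diff flip: of_real_diff)
  next
    fix z t show "mS A C (cscale (complex_of_real t) z) - nS A C (cscale (complex_of_real t) z) = t^2 * (mS A C z - nS A C z)"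
      by (simp add: hom_m[OF A SC] hom_n[OF A SC] algebra_simps)
  next
    fix z show "\<bar>mS A C z - nS A C z\<bar> \<le> ((cC^2)^2 + cC^2) * (anorm A z)^2"
      using bnd_m[OF A SC cC, of z] bnd_n[OF A cC, of z] mS_nonneg[OF A, of C z] nS_nonneg[OF A, of C z]
      by (simp add: algebra_simps abs_if)
  qed
  have OBm: "\<bar>nS A B y - mS A B y\<bar> \<le> wBm * (anorm A y)^2 \<and> 0 \<le> wBm" for y
    unfolding wBm_def
  proof (rule omega_le[OF A, where M = "(cB^2)^2 + cB^2"])
    fix z
    show "cmod (ainner A (sharpA A B (B z) - sharpA A B (B (sharpA A B (B z)))) z) = \<bar>nS A B z - mS A B z\<bar>"
      by (simp add: a.diff_left L_pp[OF A SB] L_p[OF A SB] del: of_real_diff flip: of_real_diff)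
  next
    fix z t show "nS A B (cscale (complex_of_real t) z) - mS A B (cscale (complex_of_real t) z) = t^2 * (nS A B z - mS A B z)"
      by (simp add: hom_m[OF A SB] hom_n[OF A SB] algebra_simps)
  next
    fix z show "\<bar>nS A B z - mS A B z\<bar> \<le> ((cB^2)^2 + cB^2) * (anorm A z)^2"
      using bnd_m[OF A SB cB, of z] bnd_n[OF A cB, of z] mS_nonneg[OF A, of B z] nS_nonneg[OF A, of B z]
      by (simp add: algebra_simps abs_if)
  qed
  have unit: "(anorm A (fst z))^2 + (anorm A (snd z))^2 = 1" if "a0norm A z = 1" for z
  proof -
    have "Re (a0inner A z z) = 1" using that unfolding a0norm_def by simp
    then show ?thesis unfolding a0inner_def anorm_sq[OF A] by simp
  qed
  have Yval: "a0inner A (Y z) z = ainner A (C (B (snd z))) (C (fst z)) + ainner A (B (C (fst z))) (B (snd z))" for z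
    unfolding Y_def a0inner_def offdiag_def by (simp add: case_prod_beta I1[OF A SC] I1[OF A SB])
  have Ybnd: "cmod (a0inner A (Y z) z) \<le> cC^2 * cB + cB^2 * cC" if "a0norm A z = 1" for z
  proof -
    define a1 where "a1 = anorm A (fst z)"
    define a2 where "a2 = anorm A (snd z)"
    have a10: "a1 \<ge> 0" "a2 \<ge> 0" unfolding a1_def a2_def using A by auto
    have u: "a1^2 + a2^2 = 1" using unit[OF that] unfolding a1_def a2_def .
    have "a1^2 \<le> 1" using u zero_le_power2[of a2] by linarith
    moreover have "a2^2 \<le> 1" using u zero_le_power2[of a1] by linarith
    ultimately have "a1^2 \<le> 1^2" "a2^2 \<le> 1^2" by simp_all
    then have a11: "a1 \<le> 1" "a2 \<le> 1" by (auto intro: power2_le_imp_le)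
    have "cmod (a0inner A (Y z) z) \<le> cmod (ainner A (C (B (snd z))) (C (fst z))) + cmod (ainner A (B (C (fst z))) (B (snd z)))"
      unfolding Yval by (rule norm_triangle_ineq)
    also have "\<dots> \<le> anorm A (C (B (snd z))) * anorm A (C (fst z)) + anorm A (B (C (fst z))) * anorm A (B (snd z))"
      by (intro add_mono acs[OF A])
    also have "\<dots> \<le> (cC * (cB * a2)) * (cC * a1) + (cB * (cC * a1)) * (cB * a2)"
    proof (intro add_mono mult_mono)
      show "anorm A (C (B (snd z))) \<le> cC * (cB * a2)"
        using cC(2)[of "B (snd z)"] cB(2)[of "snd z"] cC(1) unfolding a2_def
        by (meson mult_left_mono order_trans)
      show "anorm A (B (C (fst z))) \<le> cB * (cC * a1)"
        using cB(2)[of "C (fst z)"] cC(2)[of "fst z"] cB(1) unfolding a1_def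
        by (meson mult_left_mono order_trans)
    qed (use cC cB a10 A in \<open>auto simp: a1_def a2_def\<close>)
    also have "\<dots> = (cC^2 * cB + cB^2 * cC) * (a1 * a2)" by (simp add: power2_eq_square algebra_simps)
    also have "\<dots> \<le> (cC^2 * cB + cB^2 * cC) * 1"
      using a10 a11 cB(1) cC(1) by (intro mult_left_mono) (auto simp: mult_le_one)
    finally show ?thesis by simp
  qed
  have O0: "cmod (a0inner A (Y z) z) \<le> w0" if "a0norm A z = 1" for z
  proof -
    have bdd: "bdd_above (insert 0 {cmod (a0inner A (Y z) z) | z. a0norm A z = 1})"
      by (rule bdd_aboveI[of _ "cC^2 * cB + cB^2 * cC"]) (use Ybnd cB cC in auto)
    show ?thesis unfolding w0_def omegaA0_def by (rule cSup_upper[OF _ bdd]) (rule insertI2, use that in blast)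
  qed
  have w00: "0 \<le> w0"
  proof -
    have bdd: "bdd_above (insert 0 {cmod (a0inner A (Y z) z) | z. a0norm A z = 1})"
      by (rule bdd_aboveI[of _ "cC^2 * cB + cB^2 * cC"]) (use Ybnd cB cC in auto)
    show ?thesis unfolding w0_def omegaA0_def by (rule cSup_upper[OF _ bdd]) auto
  qed
  define R where "R = 1/2 * max wCp wBp + 1/2 * max wCm wBm + w0"
  have "0 \<le> wCp" "0 \<le> wCm" using OCp[of 0] OCm[of 0] by auto
  then have "0 \<le> max wCp wBp" "0 \<le> max wCm wBm" by auto
  then have R0: "R \<ge> 0" unfolding R_def using w00 by simp
  have pt: "(cmod (a0inner A (offdiag B C z) z))^2 + (a0norm A (offdiag B C z))^4 \<le> R"
    if z1: "a0norm A z = 1" for z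
  proof -
    obtain x1 x2 where z: "z = (x1, x2)" by fastforce
    define PC where "PC = sharpA A C (C x1)"
    define PB where "PB = sharpA A B (B x2)"
    define Xz where "Xz = (B x2, C x1)"
    define P0 where "P0 = (PC, PB)"
    have Xz: "offdiag B C z = Xz" unfolding z Xz_def offdiag_def by simp
    have e1: "Re (a0inner A z z) = 1" using z1 unfolding a0norm_def by simp
    have bo: "(cmod (a0inner A Xz z))^2 + (cmod (a0inner A P0 z))^2
        \<le> max (Re (a0inner A Xz Xz)) (Re (a0inner A P0 P0)) + cmod (a0inner A Xz P0)"
      by (rule f0.bombieri[OF e1])
    define u where "u = nS A C x1 + nS A B x2"
    define v where "v = mS A C x1 + mS A B x2"
    have u0: "u \<ge> 0" unfolding u_def using nS_nonneg[OF A] by (simp add: add_nonneg_nonneg)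
    have P0z: "a0inner A P0 z = complex_of_real u"
      unfolding P0_def z a0inner_def PC_def PB_def u_def by (simp add: L_p[OF A SC] L_p[OF A SB])
    have XX: "Re (a0inner A Xz Xz) = u"
      unfolding Xz_def a0inner_def u_def nS_def by simp
    have PP: "Re (a0inner A P0 P0) = v"
      unfolding P0_def a0inner_def v_def mS_def PC_def PB_def by simp
    have XP: "a0inner A Xz P0 = a0inner A (Y z) z"
      unfolding Yval unfolding Xz_def P0_def a0inner_def PC_def PB_def z
      by (simp add: I2[OF A SC] I2[OF A SB] add.commute)
    have nX: "(a0norm A Xz)^4 = u^2"
    proof -
      have "(a0norm A Xz)^2 = u" unfolding a0norm_def using XX u0 by simp
      then show ?thesis by (metis power_mult numeral_times_numeral semiring_norm(12) semiring_norm(13) mult_2)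
    qed
    have "(cmod (a0inner A Xz z))^2 + (a0norm A Xz)^4 \<le> max u v + w0"
      using bo unfolding P0z XX PP XP nX using O0[OF z1] u0 by simp
    also have "max u v \<le> 1/2 * max wCp wBp + 1/2 * max wCm wBm"
    proof -
      define a1 where "a1 = (anorm A x1)^2"
      define a2 where "a2 = (anorm A x2)^2"
      have aa: "a1 \<ge> 0" "a2 \<ge> 0" "a1 + a2 = 1" unfolding a1_def a2_def using unit[OF z1] z by auto
      have "u + v = (mS A C x1 + nS A C x1) + (nS A B x2 + mS A B x2)" unfolding u_def v_def by simp
      also have "\<dots> \<le> wCp * a1 + wBp * a2"
        using OCp[of x1] OBp[of x2] unfolding a1_def a2_def by (intro add_mono) auto
      also have "\<dots> \<le> max wCp wBp" by (rule comb_le[OF aa])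
      finally have s1: "u + v \<le> max wCp wBp" .
      have "\<bar>u - v\<bar> = \<bar>(nS A C x1 - mS A C x1) + (nS A B x2 - mS A B x2)\<bar>"
        unfolding u_def v_def by (simp add: algebra_simps)
      also have "\<dots> \<le> \<bar>mS A C x1 - nS A C x1\<bar> + \<bar>nS A B x2 - mS A B x2\<bar>" by linarith
      also have "\<dots> \<le> wCm * a1 + wBm * a2"
        using OCm[of x1] OBm[of x2] unfolding a1_def a2_def by (intro add_mono) auto
      also have "\<dots> \<le> max wCm wBm" by (rule comb_le[OF aa])
      finally have s2: "\<bar>u - v\<bar> \<le> max wCm wBm" .
      show ?thesis using max_half[of u v] s1 s2 by linarith
    qed
    finally show ?thesis unfolding Xz R_def by simp
  qed
  define D where "D = insert 0 {sqrt ((cmod (a0inner A (offdiag B C z) z))\<^sup>2 + (a0norm A (offdiag B C z))^4)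
                              | z. a0norm A z = 1}"
  have Dle: "x \<le> sqrt R" if "x \<in> D" for x
    using that pt R0 unfolding D_def by (auto intro: real_sqrt_le_mono)
  have dw: "dwA0 A (offdiag B C) = Sup D" unfolding dwA0_def D_def ..
  have up: "Sup D \<le> sqrt R" by (rule cSup_least) (use Dle D_def in auto)
  have lo: "0 \<le> Sup D" by (rule cSup_upper) (auto simp: D_def intro!: bdd_aboveI[of _ "sqrt R"] Dle[unfolded D_def])
  have "(Sup D)^2 \<le> (sqrt R)^2" using up lo by (intro power_mono) auto
  then have "(dwA0 A (offdiag B C))^2 \<le> R" using R0 unfolding dw by simp
  then show ?thesis unfolding R_def wCp_def wBp_def wCm_def wBm_def w0_def Y_def .
qed

end
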